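(* Let $(V_n)_{n\in\mathbb{N}}$ be a quasi non-conforming approximation of $V$ in $X$. Then: (i) if $v_n\in V_{m_n}$ with $m_n\to\infty$ and $v_n\rightharpoonup v$ weakly in $X$, then $v\in V$. (ii) If $v_n\in V_{m_n}$ with $m_n\to\infty$, $\sup_n\|v_n\|_X<\infty$, and $v\in V$, then $v_n\rightharpoonup v$ weakly in $X$ if and only if $P_Hjv_n\rightharpoonup jv$ weakly in $H$. (iii) For every $h\in H$ there are $v_n\in V_{m_n}$ with $m_n\to\infty$ such that $jv_n\to h$ in $Y$.
   Context: An evolution triple $(V,H,j)$: $V$ reflexive Banach, $H$ Hilbert, $j:V\to H$ linear injective bounded with dense range. Let $(V,H,j)$, $(X,Y,j)$ be evolution triples with $V\subseteq X$, $\|\cdot\|_V=\|\cdot\|_X$ on $V$, $H\subseteq Y$, $(\cdot,\cdot)_H=(\cdot,\cdot)_Y$ on $H$, the embedding $X\to Y$ restricting to that of $V\to H$; $P_H:Y\to H$ is the orthogonal projection. $I=(0,T)$, $T<\infty$, $1<p<\infty$. A sequence of closed subspaces $(V_n)$ of $X$ is a quasi non-conforming approximation of $V$ in $X$ if (QNC.1) there is a dense $D\subseteq V$ such that each $v\in D$ is the $X$-limit of some $v_n\in V_n$, and (QNC.2) whenever $\boldsymbol{x}_n\in L^p(I,V_{m_n})$ with $m_n\to\infty$ and $\boldsymbol{x}_n\rightharpoonup\boldsymbol{x}$ in $L^p(I,X)$, then $\boldsymbol{x}\in L^p(I,V)$. *)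

theory Defs
  imports "HOL-Analysis.Analysis"
begin

definition bdd_lin_functional_on :: "'a::real_vector set \<Rightarrow> ('a \<Rightarrow> real) \<Rightarrow> ('a \<Rightarrow> real) \<Rightarrow> bool" where
  "bdd_lin_functional_on S N l \<longleftrightarrow>
     (\<forall>u\<in>S. \<forall>w\<in>S. l (u + w) = l u + l w) \<and>
     (\<forall>c. \<forall>u\<in>S. l (c *\<^sub>R u) = c * l u) \<and>
     (\<exists>C. \<forall>u\<in>S. \<bar>l u\<bar> \<le> C * N u)"

definition weak_conv_on :: "'a::real_vector set \<Rightarrow> ('a \<Rightarrow> real) \<Rightarrow> (nat \<Rightarrow> 'a) \<Rightarrow> 'a \<Rightarrow> bool" where
  "weak_conv_on S N xs x \<longleftrightarrow>
     (\<forall>l. bdd_lin_functional_on S N l \<longrightarrow> (\<lambda>n. l (xs n)) \<longlonglongrightarrow> l x)"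

definition dual_norm_on :: "'a::real_normed_vector set \<Rightarrow> ('a \<Rightarrow> real) \<Rightarrow> real" where
  "dual_norm_on S f = Sup {\<bar>f v\<bar> | v. v \<in> S \<and> norm v \<le> 1}"

text \<open>Elements of S* are
  represented by functions bounded linear on S, identified when they agree on S.\<close>
definition reflexive_on :: "'a::real_normed_vector set \<Rightarrow> bool" where
  "reflexive_on S \<longleftrightarrow>
    (\<forall>\<Phi> :: ('a \<Rightarrow> real) \<Rightarrow> real.
       ((\<forall>f g. bdd_lin_functional_on S norm f \<longrightarrow> bdd_lin_functional_on S norm g \<longrightarrow>
                 (\<forall>v\<in>S. f v = g v) \<longrightarrow> \<Phi> f = \<Phi> g) \<and>
        (\<forall>f g. bdd_lin_functional_on S norm f \<longrightarrow> bdd_lin_functional_on S norm g \<longrightarrow>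
                 \<Phi> (\<lambda>v. f v + g v) = \<Phi> f + \<Phi> g) \<and>
        (\<forall>c f. bdd_lin_functional_on S norm f \<longrightarrow> \<Phi> (\<lambda>v. c * f v) = c * \<Phi> f) \<and>
        (\<exists>C. \<forall>f. bdd_lin_functional_on S norm f \<longrightarrow> \<bar>\<Phi> f\<bar> \<le> C * dual_norm_on S f))
       \<longrightarrow> (\<exists>v\<in>S. \<forall>f. bdd_lin_functional_on S norm f \<longrightarrow> \<Phi> f = f v))"

definition orth_proj :: "'y::real_inner set \<Rightarrow> 'y \<Rightarrow> 'y" where
  "orth_proj H y = (THE h. h \<in> H \<and> (\<forall>k\<in>H. inner (y - h) k = 0))"

definition strongly_measurable_on :: "real set \<Rightarrow> (real \<Rightarrow> 'x::real_normed_vector) \<Rightarrow> bool" where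
  "strongly_measurable_on I u \<longleftrightarrow>
     (\<exists>s :: nat \<Rightarrow> real \<Rightarrow> 'x. (\<forall>k. simple_function (lebesgue_on I) (s k)) \<and>
        (AE t in lebesgue_on I. (\<lambda>k. s k t) \<longlonglongrightarrow> u t))"

definition Lp_fun :: "real set \<Rightarrow> real \<Rightarrow> (real \<Rightarrow> 'x::real_normed_vector) set" where
  "Lp_fun I p = {u. strongly_measurable_on I u \<and>
                    (\<integral>\<^sup>+ t. ennreal (norm (u t) powr p) \<partial>lebesgue_on I) < \<infinity>}"

definition Lp_norm :: "real set \<Rightarrow> real \<Rightarrow> (real \<Rightarrow> 'x::real_normed_vector) \<Rightarrow> real" where
  "Lp_norm I p u = (enn2real (\<integral>\<^sup>+ t. ennreal (norm (u t) powr p) \<partial>lebesgue_on I)) powr (1 / p)"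

definition Lp_bdd_lin_functional :: "real set \<Rightarrow> real \<Rightarrow> ((real \<Rightarrow> 'x::real_normed_vector) \<Rightarrow> real) \<Rightarrow> bool" where
  "Lp_bdd_lin_functional I p l \<longleftrightarrow>
     (\<forall>u\<in>Lp_fun I p. \<forall>w\<in>Lp_fun I p. l (\<lambda>t. u t + w t) = l u + l w) \<and>
     (\<forall>c. \<forall>u\<in>Lp_fun I p. l (\<lambda>t. c *\<^sub>R u t) = c * l u) \<and>
     (\<exists>C. \<forall>u\<in>Lp_fun I p. \<bar>l u\<bar> \<le> C * Lp_norm I p u)"

definition Lp_weak_conv :: "real set \<Rightarrow> real \<Rightarrow> (nat \<Rightarrow> real \<Rightarrow> 'x::real_normed_vector) \<Rightarrow> (real \<Rightarrow> 'x) \<Rightarrow> bool" where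
  "Lp_weak_conv I p xs x \<longleftrightarrow>
     (\<forall>l. Lp_bdd_lin_functional I p l \<longrightarrow> (\<lambda>n. l (xs n)) \<longlonglongrightarrow> l x)"

definition evolution_triple :: "'x::real_normed_vector set \<Rightarrow> 'y::real_inner set \<Rightarrow> ('x \<Rightarrow> 'y) \<Rightarrow> bool" where
  "evolution_triple V H j \<longleftrightarrow>
     subspace V \<and> complete V \<and> reflexive_on V \<and>
     subspace H \<and> complete H \<and>
     linear j \<and> (\<exists>C. \<forall>v\<in>V. norm (j v) \<le> C * norm v) \<and> inj_on j V \<and>
     j ` V \<subseteq> H \<and> H \<subseteq> closure (j ` V)"

definition quasi_nonconforming :: "real \<Rightarrow> real \<Rightarrow> 'x::real_normed_vector set \<Rightarrow> (nat \<Rightarrow> 'x set) \<Rightarrow> bool" where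
  "quasi_nonconforming T p V Vs \<longleftrightarrow>
     (\<forall>n. subspace (Vs n) \<and> closed (Vs n)) \<and>
     (\<exists>D. D \<subseteq> V \<and> V \<subseteq> closure D \<and>
        (\<forall>v\<in>D. \<exists>vs. (\<forall>n. vs n \<in> Vs n) \<and> vs \<longlonglongrightarrow> v)) \<and>
     (\<forall>(m :: nat \<Rightarrow> nat) xs x. filterlim m at_top sequentially \<longrightarrow>
        (\<forall>n. xs n \<in> Lp_fun {0<..<T} p \<and> (AE t in lebesgue_on {0<..<T}. xs n t \<in> Vs (m n))) \<longrightarrow>
        x \<in> Lp_fun {0<..<T} p \<longrightarrow>
        Lp_weak_conv {0<..<T} p xs x \<longrightarrow>
        (AE t in lebesgue_on {0<..<T}. x t \<in> V))"

end

theory Submission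
  imports Defs "HOL-Library.Diagonal_Subsequence"
begin



lemma near_pt:
  assumes "(h0::'a::metric_space) \<in> H" "infdist y H < r" shows "\<exists>h\<in>H. dist y h < r"
proof -
  have "H \<noteq> {}" using assms by auto
  then show ?thesis using assms(2) unfolding infdist_notempty[OF \<open>H \<noteq> {}\<close>]
    by (subst (asm) cINF_less_iff) (auto intro: bdd_belowI[where m=0])
qed

lemma parallelogram:
  fixes a b :: "'a::real_inner"
  shows "norm (a + b)^2 + norm (a - b)^2 = 2 * norm a ^2 + 2 * norm b^2"
  by (simp add: power2_norm_eq_inner inner_add inner_diff algebra_simps inner_commute)

lemma proj_exists:
  fixes H :: "'y::real_inner set"
  assumes sH: "subspace H" and cH: "complete H"
  shows "\<exists>h\<in>H. \<forall>k\<in>H. inner (y - h) k = 0"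
proof -
  define d where "d = infdist y H"
  have d0: "0 \<le> d" by (simp add: d_def infdist_nonneg)
  have dle: "d \<le> norm (y - k)" if "k \<in> H" for k
    using infdist_le[OF that, of y] by (simp add: d_def dist_norm)
  have 0: "0 \<in> H" using sH by (simp add: subspace_0)
  have "\<exists>h\<in>H. norm (y - h)^2 < d^2 + 1/(Suc n)" for n
  proof -
    have "d < sqrt (d^2 + 1/Suc n)"
      by (rule real_less_rsqrt) simp
    then obtain h where "h \<in> H" "dist y h < sqrt (d^2 + 1/Suc n)"
      using near_pt[OF 0] d_def by blast
    then have "norm (y - h)^2 < d^2 + 1/Suc n"
    proof -
      have "norm (y - h) < sqrt (d^2 + 1/Suc n)" using \<open>dist y h < _\<close> by (simp add: dist_norm)
      then have "norm (y - h)^2 < (sqrt (d^2 + 1/Suc n))^2"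
        by (intro power_strict_mono) auto
      then show ?thesis by simp
    qed
    then show ?thesis using \<open>h \<in> H\<close> by blast
  qed
  then obtain h where hH: "\<And>n. h n \<in> H" and hd: "\<And>n. norm (y - h n)^2 < d^2 + 1/(Suc n)"
    by metis
  have key: "norm (h m - h n)^2 \<le> 2/Suc n + 2/Suc m" for m n
  proof -
    have mid: "(1/2) *\<^sub>R (h n + h m) \<in> H"
      using sH hH by (simp add: subspace_add subspace_scale)
    have "2 * d \<le> norm ((y - h n) + (y - h m))"
    proof -
      have "(y - h n) + (y - h m) = 2 *\<^sub>R (y - (1/2) *\<^sub>R (h n + h m))"
        by (simp add: algebra_simps scaleR_2)
      then show ?thesis using dle[OF mid] by simp
    qed
    then have "4 * d^2 \<le> norm ((y - h n) + (y - h m))^2"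
    proof -
      have "(2*d)^2 \<le> norm ((y - h n) + (y - h m))^2"
        using \<open>2 * d \<le> _\<close> d0 by (intro power_mono) auto
      then show ?thesis by (simp add: power_mult_distrib)
    qed
    moreover have "(y - h n) - (y - h m) = h m - h n" by simp
    ultimately show ?thesis using parallelogram[of "y - h n" "y - h m"] hd[of n] hd[of m] by simp
  qed
  have "Cauchy h"
  proof (rule metric_CauchyI)
    fix e :: real assume "0 < e"
    obtain N where N: "4 / e^2 < real N" using reals_Archimedean2 by blast
    have "4 / real (Suc N) < e^2"
    proof -
      have "4 / e^2 < real (Suc N)" using N by simp
      then show ?thesis using \<open>0<e\<close> by (simp add: field_simps)
    qed
    show "\<exists>M. \<forall>m\<ge>M. \<forall>n\<ge>M. dist (h m) (h n) < e"
    proof (intro exI allI impI)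
      fix m n assume "N \<le> m" "N \<le> n"
      then have "2 / real (Suc n) \<le> 2 / real (Suc N)" "2 / real (Suc m) \<le> 2 / real (Suc N)"
        by (auto intro!: divide_left_mono)
      then have "norm (h m - h n)^2 < e^2"
        using key[of m n] \<open>4 / real (Suc N) < e^2\<close> by simp
      then show "dist (h m) (h n) < e"
        using \<open>0<e\<close> by (simp add: dist_norm power_less_imp_less_base)
    qed
  qed
  then obtain g where gH: "g \<in> H" and hg: "h \<longlonglongrightarrow> g"
    using cH hH unfolding complete_def by blast
  have "(\<lambda>n. norm (y - h n)^2) \<longlonglongrightarrow> norm (y - g)^2"
    by (intro tendsto_intros hg)
  moreover have "(\<lambda>n. d^2 + 1 / real (Suc n)) \<longlonglongrightarrow> d^2 + 0"
    by (intro tendsto_intros LIMSEQ_Suc[OF lim_inverse_n'[unfolded inverse_eq_divide]] )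
  ultimately have gmin: "norm (y - g)^2 \<le> d^2"
    using hd by (intro LIMSEQ_le[of _ _ "\<lambda>n. d^2 + 1/real (Suc n)"]) (auto intro: less_imp_le)
  show ?thesis
  proof (intro bexI[OF _ gH] ballI)
    fix k assume kH: "k \<in> H"
    define c where "c = inner (y - g) k"
    define q where "q = norm k ^ 2"
    have q0: "0 \<le> q" by (simp add: q_def)
    have ineq: "2 * t * c \<le> t^2 * q" for t
    proof -
      have "g + t *\<^sub>R k \<in> H" using sH gH kH by (simp add: subspace_add subspace_scale)
      then have "d \<le> norm (y - (g + t *\<^sub>R k))" by (rule dle)
      then have "d^2 \<le> norm (y - (g + t *\<^sub>R k))^2" using d0 by (simp add: power_mono)
      also have "\<dots> = norm (y - g)^2 - 2 * t * c + t^2 * q"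
        unfolding c_def q_def power2_norm_eq_inner
        by (simp add: inner_diff inner_add algebra_simps inner_commute power2_eq_square)
      finally show ?thesis using gmin by simp
    qed
    have A: "2*(c/(q+1))*c*(q+1)^2 \<le> (c/(q+1))^2*q*(q+1)^2"
      by (rule mult_right_mono[OF ineq]) simp
    have e1: "2*(c/(q+1))*c*(q+1)^2 = 2*c^2*(q+1)" using q0 by (simp add: power2_eq_square field_simps)
    have nz: "(q+1)^2 \<noteq> 0" using q0 by simp
    have gen: "\<And>Q::real. Q \<noteq> 0 \<Longrightarrow> c^2/Q*q*Q = c^2*q" by simp
    have e2: "(c/(q+1))^2*q*(q+1)^2 = c^2*q" unfolding power_divide using gen[OF nz] .
    have "2 * c^2 * (q+1) \<le> c^2 * q" using A unfolding e1 e2 .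
    then have "c^2 * (q + 2) \<le> 0" by (simp add: algebra_simps)
    then have "c^2 = 0" using q0
      by (metis add_nonneg_pos mult_le_0_iff not_le zero_le_power2 zero_less_numeral antisym)
    then show "inner (y - g) k = 0" by (simp add: c_def)
  qed
qed




section \<open>Orthogonal projection\<close>

lemma proj_unique:
  fixes H :: "'y::real_inner set"
  assumes sH: "subspace H" and "h \<in> H" "\<forall>k\<in>H. inner (y - h) k = 0"
    and "h' \<in> H" "\<forall>k\<in>H. inner (y - h') k = 0"
  shows "h = h'"
proof -
  have d: "h - h' \<in> H" using assms by (simp add: subspace_diff)
  have "inner (h - h') (h - h') = inner (y - h') (h - h') - inner (y - h) (h - h')"
    by (simp add: inner_diff algebra_simps)
  also have "\<dots> = 0" using assms d by simp
  finally show ?thesis by simp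
qed

lemma proj_char:
  fixes H :: "'y::real_inner set"
  assumes sH: "subspace H" and cH: "complete H"
  shows "orth_proj H y \<in> H \<and> (\<forall>k\<in>H. inner (y - orth_proj H y) k = 0)"
proof -
  have "\<exists>!h. h \<in> H \<and> (\<forall>k\<in>H. inner (y - h) k = 0)"
    using proj_exists[OF sH cH, of y] proj_unique[OF sH] by blast
  then show ?thesis unfolding orth_proj_def by (rule theI')
qed

lemma proj_eqI:
  fixes H :: "'y::real_inner set"
  assumes sH: "subspace H" and cH: "complete H" and "h \<in> H" "\<forall>k\<in>H. inner (y - h) k = 0"
  shows "orth_proj H y = h"
  using proj_unique[OF sH _ _ assms(3,4)] proj_char[OF sH cH, of y] by blast

lemma proj_id:
  fixes H :: "'y::real_inner set"
  assumes sH: "subspace H" and cH: "complete H" and "y \<in> H"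
  shows "orth_proj H y = y"
  using proj_eqI[OF sH cH assms(3)] by simp

lemma proj_inner:
  fixes H :: "'y::real_inner set"
  assumes sH: "subspace H" and cH: "complete H" and "k \<in> H"
  shows "inner (orth_proj H y) k = inner y k"
  using proj_char[OF sH cH, of y] assms(3) by (simp add: inner_diff_left)

lemma proj_add:
  fixes H :: "'y::real_inner set"
  assumes sH: "subspace H" and cH: "complete H"
  shows "orth_proj H (y + z) = orth_proj H y + orth_proj H z"
proof (rule proj_eqI[OF sH cH])
  show "orth_proj H y + orth_proj H z \<in> H"
    using proj_char[OF sH cH] sH by (simp add: subspace_add)
  show "\<forall>k\<in>H. inner (y + z - (orth_proj H y + orth_proj H z)) k = 0"
    using proj_char[OF sH cH, of y] proj_char[OF sH cH, of z]
    by (simp add: inner_diff_left inner_add_left)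
qed

lemma proj_scale:
  fixes H :: "'y::real_inner set"
  assumes sH: "subspace H" and cH: "complete H"
  shows "orth_proj H (c *\<^sub>R y) = c *\<^sub>R orth_proj H y"
proof (rule proj_eqI[OF sH cH])
  show "c *\<^sub>R orth_proj H y \<in> H"
    using proj_char[OF sH cH] sH by (simp add: subspace_scale)
  show "\<forall>k\<in>H. inner (c *\<^sub>R y - c *\<^sub>R orth_proj H y) k = 0"
    using proj_char[OF sH cH, of y]
    by (simp add: inner_diff_left)
qed

section \<open>Ultrafilters\<close>

definition ultra :: "'a filter \<Rightarrow> bool" where
  "ultra F \<longleftrightarrow> (\<forall>A. eventually (\<lambda>x. x \<in> A) F \<or> eventually (\<lambda>x. x \<notin> A) F)"



lemma ultra_exists:
  fixes G :: "'a filter"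
  assumes G: "G \<noteq> bot"
  shows "\<exists>F. F \<le> G \<and> F \<noteq> bot \<and> ultra F"
proof -
  define ES where "ES F = {P. eventually P F}" for F :: "'a filter"
  have ES_le: "F2 \<le> F1 \<longleftrightarrow> ES F1 \<subseteq> ES F2" for F1 F2
    by (auto simp: ES_def le_filter_def)
  have ES_inj: "ES F1 = ES F2 \<Longrightarrow> F1 = F2" for F1 F2
    by (auto simp: ES_def filter_eq_iff)
  define A where "A = ES ` {F. F \<le> G \<and> F \<noteq> bot}"
  have "\<exists>M\<in>A. \<forall>X\<in>A. M \<subseteq> X \<longrightarrow> X = M"
  proof (rule Zorn_Lemma2, intro ballI)
    fix C assume C: "C \<in> chains A"
    show "\<exists>U\<in>A. \<forall>X\<in>C. X \<subseteq> U"
    proof (cases "C = {}")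
      case True then show ?thesis using G by (auto simp: A_def)
    next
      case False
      define Fs where "Fs = {F. F \<le> G \<and> F \<noteq> bot \<and> ES F \<in> C}"
      have CA: "C \<subseteq> A" using C by (simp add: chains_def)
      have CFs: "C = ES ` Fs" using CA by (auto simp: A_def Fs_def)
      then have Fsne: "Fs \<noteq> {}" using False by auto
      have dir: "\<exists>x\<in>Fs. id x \<le> inf (id a) (id b)" if "a \<in> Fs" "b \<in> Fs" for a b
      proof -
        have "ES a \<subseteq> ES b \<or> ES b \<subseteq> ES a"
          using C that by (auto simp: chains_def chain_subset_def Fs_def)
        then show ?thesis
        proof
          assume "ES a \<subseteq> ES b" then have "b \<le> a" using ES_le by blast
          then show ?thesis using \<open>b \<in> Fs\<close> by (intro bexI[of _ b]) auto
        next
          assume "ES b \<subseteq> ES a" then have "a \<le> b" using ES_le by blast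
          then show ?thesis using \<open>a \<in> Fs\<close> by (intro bexI[of _ a]) auto
        qed
      qed
      define F0 where "F0 = (INF F\<in>Fs. id F)"
      have ev: "eventually P F0 \<longleftrightarrow> (\<exists>F\<in>Fs. eventually P F)" for P
        unfolding F0_def using eventually_INF_base[OF Fsne dir] by simp
      have "F0 \<noteq> bot"
        using ev[of "\<lambda>_. False"] by (auto simp: Fs_def eventually_False)
      moreover have "F0 \<le> G"
      proof -
        obtain F where "F \<in> Fs" using Fsne by auto
        then have "F0 \<le> F" unfolding F0_def by (simp add: Inf_lower)
        then show ?thesis using \<open>F \<in> Fs\<close> by (auto simp: Fs_def)
      qed
      ultimately have "ES F0 \<in> A" by (auto simp: A_def)
      moreover have "\<forall>X\<in>C. X \<subseteq> ES F0"
        using CFs ev by (auto simp: ES_def)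
      ultimately show ?thesis by blast
    qed
  qed
  then obtain F where F: "F \<le> G" "F \<noteq> bot" and max: "\<And>F'. F' \<le> G \<Longrightarrow> F' \<noteq> bot \<Longrightarrow> ES F \<subseteq> ES F' \<Longrightarrow> ES F' = ES F"
    unfolding A_def by blast
  have "ultra F" unfolding ultra_def
  proof (rule allI, rule ccontr)
    fix S assume ne: "\<not> (eventually (\<lambda>x. x \<in> S) F \<or> eventually (\<lambda>x. x \<notin> S) F)"
    define F' where "F' = inf F (principal S)"
    have "F' \<noteq> bot"
      using ne unfolding F'_def trivial_limit_def eventually_inf_principal by auto
    moreover have "F' \<le> F" by (simp add: F'_def)
    ultimately have "ES F' = ES F" using F by (intro max) (auto simp: ES_le[symmetric] intro: order_trans)
    moreover have "eventually (\<lambda>x. x \<in> S) F'"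
      unfolding F'_def eventually_inf_principal by simp
    ultimately show False using ne by (auto simp: ES_def)
  qed
  then show ?thesis using F by blast
qed



lemma pyth: "inner r P = 0 \<Longrightarrow> norm (P + r)^2 = norm P ^2 + norm (r::'y::real_inner)^2"
  unfolding power2_norm_eq_inner by (simp add: inner_add_left inner_add_right inner_commute[of P r])

lemma proj_norm:
  fixes H :: "'y::real_inner set"
  assumes sH: "subspace H" and cH: "complete H"
  shows "norm (orth_proj H y) \<le> norm y"
proof -
  let ?P = "orth_proj H y"
  have o: "inner (y - ?P) ?P = 0" using proj_char[OF sH cH, of y] by blast
  have e: "norm (?P + (y - ?P))^2 = norm ?P ^2 + norm (y - ?P)^2" by (rule pyth[OF o])
  have "?P + (y - ?P) = y" by simp
  then have "norm y ^2 = norm ?P ^2 + norm (y - ?P)^2" using e by metis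
  then have "norm ?P ^2 \<le> norm y ^2" by simp
  then show ?thesis by (rule power2_le_imp_le) simp
qed


lemma ultra_lim:
  fixes a :: "'a \<Rightarrow> real"
  assumes U: "ultra F" and F: "F \<noteq> bot" and B: "\<And>x. \<bar>a x\<bar> \<le> B"
  shows "\<exists>L. (a \<longlongrightarrow> L) F"
proof -
  have "compact {-B..B}" by simp
  moreover have "filtermap a F \<noteq> bot" using F by (simp add: filtermap_bot_iff)
  moreover have "eventually (\<lambda>x. x \<in> {-B..B}) (filtermap a F)"
  proof -
    have "a x \<in> {-B..B}" for x using B[of x] by (auto simp: abs_le_iff)
    then show ?thesis by (auto simp: eventually_filtermap intro!: always_eventually)
  qed
  ultimately obtain L where "inf (nhds L) (filtermap a F) \<noteq> bot"
    unfolding compact_filter by blast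
  have "(a \<longlongrightarrow> L) F"
    unfolding tendsto_def
  proof (intro allI impI)
    fix S :: "real set" assume S: "open S" "L \<in> S"
    show "eventually (\<lambda>x. a x \<in> S) F"
    proof (rule ccontr)
      assume "\<not> eventually (\<lambda>x. a x \<in> S) F"
      moreover have "eventually (\<lambda>x. x \<in> a -` S) F \<or> eventually (\<lambda>x. x \<notin> a -` S) F"
        using U unfolding ultra_def by blast
      ultimately have "eventually (\<lambda>x. x \<notin> a -` S) F" by simp
      then have e1: "eventually (\<lambda>y. y \<notin> S) (filtermap a F)" by (simp add: eventually_filtermap)
      have e2: "eventually (\<lambda>y. y \<in> S) (nhds L)" using S by (rule eventually_nhds_in_open)
      have "eventually (\<lambda>y. False) (inf (nhds L) (filtermap a F))"
        unfolding eventually_inf using e1 e2 by blast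
      then show False using \<open>inf (nhds L) (filtermap a F) \<noteq> bot\<close> by (simp add: eventually_False)
    qed
  qed
  then show ?thesis by blast
qed


lemma bdd_lin_zero:
  assumes "bdd_lin_functional_on UNIV N f" shows "f 0 = 0"
proof -
  have "f (0 *\<^sub>R 0) = 0 * f 0" using assms unfolding bdd_lin_functional_on_def by blast
  then show ?thesis by simp
qed

lemma dual_norm_bound:
  fixes f :: "'x::real_normed_vector \<Rightarrow> real"
  assumes bf: "bdd_lin_functional_on UNIV norm f"
  shows "\<bar>f x\<bar> \<le> dual_norm_on UNIV f * norm x" and "0 \<le> dual_norm_on UNIV f"
proof -
  obtain C where C: "\<And>u. \<bar>f u\<bar> \<le> C * norm u" using bf unfolding bdd_lin_functional_on_def by blast
  have sc: "f (c *\<^sub>R u) = c * f u" for c u using bf unfolding bdd_lin_functional_on_def by blast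
  let ?S = "{\<bar>f v\<bar> | v. v \<in> (UNIV::'x set) \<and> norm v \<le> 1}"
  have bdd: "bdd_above ?S"
  proof (rule bdd_aboveI[where M="\<bar>C\<bar>"], clarify)
    fix v :: 'x assume "norm v \<le> 1"
    have "\<bar>f v\<bar> \<le> C * norm v" by (rule C)
    also have "\<dots> \<le> \<bar>C\<bar> * norm v" by (simp add: mult_right_mono)
    also have "\<dots> \<le> \<bar>C\<bar>" using \<open>norm v \<le> 1\<close> by (simp add: mult_left_le)
    finally show "\<bar>f v\<bar> \<le> \<bar>C\<bar>" .
  qed
  have up: "\<bar>f v\<bar> \<le> dual_norm_on UNIV f" if "norm v \<le> 1" for v
    unfolding dual_norm_on_def using that by (intro cSup_upper[OF _ bdd]) auto
  show "0 \<le> dual_norm_on UNIV f" using up[of 0] by simp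
  show "\<bar>f x\<bar> \<le> dual_norm_on UNIV f * norm x"
  proof (cases "x = 0")
    case True then show ?thesis using bdd_lin_zero[OF bf] by simp
  next
    case False
    let ?u = "(1 / norm x) *\<^sub>R x"
    have "norm ?u \<le> 1" using False by simp
    then have "\<bar>f ?u\<bar> \<le> dual_norm_on UNIV f" by (rule up)
    moreover have "f x = norm x * f ?u" using False by (simp add: sc)
    ultimately show ?thesis using False by (simp add: abs_mult mult.commute mult_left_mono)
  qed
qed

lemma refl_cluster:
  fixes x :: "'a \<Rightarrow> 'x::real_normed_vector"
  assumes R: "reflexive_on (UNIV :: 'x set)" and U: "ultra F" and F: "F \<noteq> bot"
    and M: "\<And>k. norm (x k) \<le> M"
  shows "\<exists>w. \<forall>f. bdd_lin_functional_on UNIV norm f \<longrightarrow> ((\<lambda>k. f (x k)) \<longlongrightarrow> f w) F"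
proof -
  define \<Phi> where "\<Phi> f = Lim F (\<lambda>k. f (x k))" for f :: "'x \<Rightarrow> real"
  have lim: "((\<lambda>k. f (x k)) \<longlongrightarrow> \<Phi> f) F" if bf: "bdd_lin_functional_on UNIV norm f" for f
  proof -
    have bd: "\<bar>f (x k)\<bar> \<le> dual_norm_on UNIV f * M" for k
      by (rule order_trans[OF dual_norm_bound(1)[OF bf] mult_left_mono[OF M dual_norm_bound(2)[OF bf]]])
    obtain L where "((\<lambda>k. f (x k)) \<longlongrightarrow> L) F" using ultra_lim[OF U F, of "\<lambda>k. f (x k)", OF bd] by blast
    then show ?thesis unfolding \<Phi>_def using F by (simp add: tendsto_Lim)
  qed
  have "\<exists>v\<in>UNIV. \<forall>f. bdd_lin_functional_on UNIV norm f \<longrightarrow> \<Phi> f = f v"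
    using R unfolding reflexive_on_def
  proof (elim allE impE)
    show "(\<forall>f g. bdd_lin_functional_on UNIV norm f \<longrightarrow> bdd_lin_functional_on UNIV norm g \<longrightarrow>
                 (\<forall>v\<in>UNIV. f v = g v) \<longrightarrow> \<Phi> f = \<Phi> g) \<and>
        (\<forall>f g. bdd_lin_functional_on UNIV norm f \<longrightarrow> bdd_lin_functional_on UNIV norm g \<longrightarrow>
                 \<Phi> (\<lambda>v. f v + g v) = \<Phi> f + \<Phi> g) \<and>
        (\<forall>c f. bdd_lin_functional_on UNIV norm f \<longrightarrow> \<Phi> (\<lambda>v. c * f v) = c * \<Phi> f) \<and>
        (\<exists>C. \<forall>f. bdd_lin_functional_on UNIV norm f \<longrightarrow> \<bar>\<Phi> f\<bar> \<le> C * dual_norm_on UNIV f)"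
    proof (intro conjI allI impI)
      fix f g :: "'x \<Rightarrow> real" assume "\<forall>v\<in>UNIV. f v = g v"
      then have "f = g" by auto
      then show "\<Phi> f = \<Phi> g" by simp
    next
      fix f g :: "'x \<Rightarrow> real"
      assume bf: "bdd_lin_functional_on UNIV norm f" and bg: "bdd_lin_functional_on UNIV norm g"
      show "\<Phi> (\<lambda>v. f v + g v) = \<Phi> f + \<Phi> g"
        unfolding \<Phi>_def[of "\<lambda>v. f v + g v"] using F
        by (intro tendsto_Lim) (auto intro: tendsto_add lim[OF bf] lim[OF bg])
    next
      fix c and f :: "'x \<Rightarrow> real"
      assume bf: "bdd_lin_functional_on UNIV norm f"
      show "\<Phi> (\<lambda>v. c * f v) = c * \<Phi> f"
        unfolding \<Phi>_def[of "\<lambda>v. c * f v"] using F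
        by (intro tendsto_Lim) (auto intro: tendsto_mult tendsto_const lim[OF bf])
    next
      show "\<exists>C. \<forall>f. bdd_lin_functional_on UNIV norm f \<longrightarrow> \<bar>\<Phi> f\<bar> \<le> C * dual_norm_on UNIV f"
      proof (intro exI allI impI)
        fix f :: "'x \<Rightarrow> real" assume bf: "bdd_lin_functional_on UNIV norm f"
        have "((\<lambda>k. \<bar>f (x k)\<bar>) \<longlongrightarrow> \<bar>\<Phi> f\<bar>) F" by (intro tendsto_rabs lim[OF bf])
        moreover have "\<bar>f (x k)\<bar> \<le> M * dual_norm_on UNIV f" for k
          using order_trans[OF dual_norm_bound(1)[OF bf] mult_left_mono[OF M dual_norm_bound(2)[OF bf]]]
          by (simp add: mult.commute)
        ultimately show "\<bar>\<Phi> f\<bar> \<le> M * dual_norm_on UNIV f"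
          using F by (intro tendsto_le[OF F tendsto_const]) (auto intro: always_eventually)
      qed
    qed
  qed
  then obtain w where w: "\<And>f. bdd_lin_functional_on UNIV norm f \<Longrightarrow> \<Phi> f = f w" by blast
  show ?thesis
  proof (intro exI allI impI)
    fix f :: "'x \<Rightarrow> real" assume bf: "bdd_lin_functional_on UNIV norm f"
    show "((\<lambda>k. f (x k)) \<longlongrightarrow> f w) F" using lim[OF bf] unfolding w[OF bf] .
  qed
qed




lemma inner_functional:
  fixes j :: "'x::real_normed_vector \<Rightarrow> 'y::real_inner"
  assumes bj: "bounded_linear j"
  shows "bdd_lin_functional_on UNIV norm (\<lambda>x. inner (j x) y)"
proof -
  obtain K where K: "\<And>x. norm (j x) \<le> norm x * K" using bounded_linear.bounded[OF bj] by blast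
  show ?thesis unfolding bdd_lin_functional_on_def
  proof (intro conjI ballI allI exI)
    fix u w show "inner (j (u + w)) y = inner (j u) y + inner (j w) y"
      by (simp add: linear_add[OF bounded_linear.linear[OF bj]] inner_add_left)
  next
    fix c u show "inner (j (c *\<^sub>R u)) y = c * inner (j u) y"
      by (simp add: linear_scale[OF bounded_linear.linear[OF bj]])
  next
    fix u
    have "\<bar>inner (j u) y\<bar> \<le> norm (j u) * norm y" by (rule Cauchy_Schwarz_ineq2)
    also have "\<dots> \<le> norm u * K * norm y" using K[of u] by (simp add: mult_right_mono)
    finally show "\<bar>inner (j u) y\<bar> \<le> (K * norm y) * norm u" by (simp add: algebra_simps)
  qed
qed

lemma weak_subseq:
  fixes u :: "nat \<Rightarrow> 'x::real_normed_vector" and j :: "'x \<Rightarrow> 'y::real_inner"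
  assumes R: "reflexive_on (UNIV :: 'x set)" and bj: "bounded_linear j" and ij: "inj j"
    and M: "\<And>n. norm (u n) \<le> M"
  shows "\<exists>s w. strict_mono s \<and> weak_conv_on UNIV norm (\<lambda>k. u (s k)) w"
proof -
  define a where "a m k = inner (j (u k)) (j (u m))" for m k
  obtain K where K0: "K > 0" and K: "\<And>x. norm (j x) \<le> norm x * K"
    using bounded_linear.pos_bounded[OF bj] by blast
  have M0: "0 \<le> M" using M[of 0] norm_ge_zero[of "u 0"] by linarith
  have abd: "\<bar>a m k\<bar> \<le> M * K * norm (j (u m))" for m k
  proof -
    have "\<bar>a m k\<bar> \<le> norm (j (u k)) * norm (j (u m))" unfolding a_def by (rule Cauchy_Schwarz_ineq2)
    also have "norm (j (u k)) \<le> M * K"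
      by (rule order_trans[OF K mult_right_mono[OF M less_imp_le[OF K0]]])
    then have "norm (j (u k)) * norm (j (u m)) \<le> M * K * norm (j (u m))" by (simp add: mult_right_mono)
    finally show ?thesis .
  qed
  interpret D: subseqs "\<lambda>m s. convergent (\<lambda>k. a m (s k))"
  proof
    fix m and s :: "nat \<Rightarrow> nat" assume "strict_mono s"
    have "bounded (range (\<lambda>k. a m (s k)))"
      unfolding bounded_iff using abd by (auto simp: real_norm_def)
    then obtain l r where "strict_mono r" "((\<lambda>k. a m (s k)) \<circ> r) \<longlonglongrightarrow> l"
      using bounded_imp_convergent_subsequence by blast
    then show "\<exists>r'. strict_mono r' \<and> convergent (\<lambda>k. a m ((s \<circ> r') k))"
      by (auto simp: convergent_def o_def)
  qed
  define s where "s = D.diagseq"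
  have smono: "strict_mono s" unfolding s_def by (rule D.subseq_diagseq)
  have conv: "convergent (\<lambda>k. a m (s k))" for m
  proof -
    have "convergent (\<lambda>k. a m ((D.diagseq \<circ> (+) (Suc m)) k))"
    proof (rule D.diagseq_holds)
      fix r s' :: "nat \<Rightarrow> nat" and n assume "strict_mono r" "convergent (\<lambda>k. a n (s' k))"
      then show "convergent (\<lambda>k. a n ((s' \<circ> r) k))"
        using LIMSEQ_subseq_LIMSEQ unfolding convergent_def o_def by blast
    qed
    then have "convergent (\<lambda>k. a m (D.diagseq (k + Suc m)))" by (simp add: o_def add.commute)
    then show ?thesis unfolding s_def by (rule convergent_ignore_initial_segment[THEN iffD1])
  qed
  define x where "x k = u (s k)" for k
  define L where "L m = lim (\<lambda>k. a m (s k))" for m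
  have Lm: "(\<lambda>k. a m (s k)) \<longlonglongrightarrow> L m" for m
    unfolding L_def using conv convergent_LIMSEQ_iff by blast
  define cl where "cl F w \<longleftrightarrow> (\<forall>f. bdd_lin_functional_on UNIV norm f \<longrightarrow> ((\<lambda>k. f (x k)) \<longlongrightarrow> f w) F)"
    for F :: "nat filter" and w
  have xM: "norm (x k) \<le> M" for k unfolding x_def by (rule M)
  have Aeq: "inner (j w) (j (u m)) = L m" if "F \<le> sequentially" "F \<noteq> bot" "cl F w" for F w m
  proof -
    have "((\<lambda>k. inner (j (x k)) (j (u m))) \<longlongrightarrow> inner (j w) (j (u m))) F"
      using that(3) inner_functional[OF bj] unfolding cl_def by blast
    moreover have "((\<lambda>k. inner (j (x k)) (j (u m))) \<longlongrightarrow> L m) F"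
      using tendsto_mono[OF that(1) Lm[of m]] by (simp add: a_def x_def)
    ultimately show ?thesis by (rule tendsto_unique[OF that(2)])
  qed
  have Bz: "inner (j w) z = 0" if "F \<le> sequentially" "F \<noteq> bot" "cl F w" "\<And>k. inner (j (x k)) z = 0" for F w z
  proof -
    have "((\<lambda>k. inner (j (x k)) z) \<longlongrightarrow> inner (j w) z) F"
      using that(3) inner_functional[OF bj] unfolding cl_def by blast
    then have "((\<lambda>k. 0) \<longlongrightarrow> inner (j w) z) F" using that(4) by simp
    from tendsto_unique[OF that(2) tendsto_const this] show ?thesis by simp
  qed
  have uniq: "w1 = w2" if "F1 \<le> sequentially" "F1 \<noteq> bot" "cl F1 w1"
      "F2 \<le> sequentially" "F2 \<noteq> bot" "cl F2 w2" for F1 F2 w1 w2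
  proof -
    define z where "z = j w1 - j w2"
    have "inner (j (x k)) z = 0" for k
    proof -
      have "inner (j (x k)) z = inner (j w1) (j (u (s k))) - inner (j w2) (j (u (s k)))"
        by (simp add: z_def x_def inner_diff_right inner_commute)
      also have "\<dots> = 0" using Aeq[OF that(1-3)] Aeq[OF that(4-6)] by simp
      finally show ?thesis .
    qed
    then have "inner (j w1) z = 0" "inner (j w2) z = 0"
      using Bz[OF that(1-3)] Bz[OF that(4-6)] by auto
    then have "inner z z = 0" by (simp add: z_def inner_diff_left)
    then have "j w1 = j w2" by (simp add: z_def)
    then show ?thesis using ij by (simp add: inj_eq)
  qed
  obtain F0 where F0: "F0 \<le> sequentially" "F0 \<noteq> bot" "ultra F0"
    using ultra_exists[of sequentially] by auto
  obtain w where w: "cl F0 w" using refl_cluster[where x=x, OF R F0(3) F0(2) xM] unfolding cl_def by blast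
  have "weak_conv_on UNIV norm x w"
    unfolding weak_conv_on_def
  proof (intro allI impI)
    fix f :: "'x \<Rightarrow> real" assume bf: "bdd_lin_functional_on UNIV norm f"
    show "(\<lambda>n. f (x n)) \<longlonglongrightarrow> f w"
    proof (rule ccontr)
      assume "\<not> (\<lambda>n. f (x n)) \<longlonglongrightarrow> f w"
      then obtain e where e: "e > 0" and ne: "\<not> eventually (\<lambda>n. dist (f (x n)) (f w) < e) sequentially"
        unfolding tendsto_iff by blast
      define G where "G = inf sequentially (principal {n. e \<le> dist (f (x n)) (f w)})"
      have "G \<noteq> bot"
      proof
        assume "G = bot"
        then have "eventually (\<lambda>_. False) G" by simp
        then have "eventually (\<lambda>n. n \<in> {n. e \<le> dist (f (x n)) (f w)} \<longrightarrow> False) sequentially"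
          unfolding G_def eventually_inf_principal .
        then have "eventually (\<lambda>n. dist (f (x n)) (f w) < e) sequentially"
          by (rule eventually_mono) auto
        then show False using ne by blast
      qed
      then obtain F1 where F1: "F1 \<le> G" "F1 \<noteq> bot" "ultra F1"
        using ultra_exists[of G] by auto
      have F1s: "F1 \<le> sequentially" by (rule order_trans[OF F1(1)]) (simp add: G_def)
      obtain w1 where w1: "cl F1 w1" using refl_cluster[where x=x, OF R F1(3) F1(2) xM] unfolding cl_def by blast
      have "w1 = w" using uniq[OF F1s F1(2) w1 F0(1,2) w] .
      have ev: "eventually (\<lambda>n. e \<le> dist (f (x n)) (f w)) F1"
      proof -
        have "eventually (\<lambda>n. e \<le> dist (f (x n)) (f w)) G"
          unfolding G_def eventually_inf_principal by simp
        then show ?thesis by (rule filter_leD[OF F1(1)])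
      qed
      have "((\<lambda>n. dist (f (x n)) (f w)) \<longlongrightarrow> dist (f w1) (f w)) F1"
        using w1 bf unfolding cl_def by (intro tendsto_dist tendsto_const) auto
      then have "e \<le> dist (f w1) (f w)"
        using F1(2) ev by (intro tendsto_le[OF F1(2) _ tendsto_const]) auto
      then show False using \<open>w1 = w\<close> e by simp
    qed
  qed
  then show ?thesis using smono unfolding x_def by blast
qed




lemma const_Lp:
  fixes c :: "'x::real_normed_vector" assumes T: "0 < T" and p: "0 < p"
  shows "(\<lambda>t. c) \<in> Lp_fun {0<..<T} p" and "Lp_norm {0<..<T} p (\<lambda>t. c) = norm c * T powr (1/p)"
proof -
  have em: "emeasure (lebesgue_on {0<..<T}) {0<..<T} = ennreal T"
    using T by (simp add: emeasure_restrict_space)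
  have int: "(\<integral>\<^sup>+ t. ennreal (norm c powr p) \<partial>lebesgue_on {0<..<T}) = ennreal (norm c powr p * T)"
    using em T by (simp add: ennreal_mult)
  have sm: "strongly_measurable_on {0<..<T} (\<lambda>t. c)"
    unfolding strongly_measurable_on_def
    by (rule exI[of _ "\<lambda>k t. c"]) (auto intro: always_eventually)
  show "(\<lambda>t. c) \<in> Lp_fun {0<..<T} p"
    unfolding Lp_fun_def using sm int by simp
  have "Lp_norm {0<..<T} p (\<lambda>t. c) = (norm c powr p * T) powr (1/p)"
    unfolding Lp_norm_def int using T by simp
  also have "\<dots> = norm c * T powr (1/p)"
    using p by (simp add: powr_mult powr_powr)
  finally show "Lp_norm {0<..<T} p (\<lambda>t. c) = norm c * T powr (1/p)" .
qed

lemma part1: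
  fixes V :: "'x::real_normed_vector set"
  assumes T: "0 < T" and p: "1 < p" and qnc: "quasi_nonconforming T p V Vs"
    and m: "filterlim m at_top sequentially" and vs: "\<And>n. vs n \<in> Vs (m n)"
    and wc: "weak_conv_on UNIV norm vs v"
  shows "v \<in> V"
proof -
  let ?I = "{0<..<T::real}"
  define K where "K = T powr (1/p)"
  have p0: "0 < p" using p by simp
  have Lpc: "(\<lambda>t. c) \<in> Lp_fun ?I p" for c :: 'x using const_Lp[OF T p0] by blast
  have nc: "Lp_norm ?I p (\<lambda>t. c) = norm c * K" for c :: 'x using const_Lp[OF T p0] K_def by blast
  have "Lp_weak_conv ?I p (\<lambda>n t. vs n) (\<lambda>t. v)"
    unfolding Lp_weak_conv_def
  proof (intro allI impI)
    fix l :: "(real \<Rightarrow> 'x) \<Rightarrow> real" assume bl: "Lp_bdd_lin_functional ?I p l"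
    define f where "f x = l (\<lambda>t. x)" for x
    have add: "\<forall>u\<in>Lp_fun ?I p. \<forall>w\<in>Lp_fun ?I p. l (\<lambda>t. u t + w t) = l u + l w"
      and sc: "\<forall>c. \<forall>u\<in>Lp_fun ?I p. l (\<lambda>t. c *\<^sub>R u t) = c * l u"
      and "\<exists>C. \<forall>u\<in>Lp_fun ?I p. \<bar>l u\<bar> \<le> C * Lp_norm ?I p u"
      using bl unfolding Lp_bdd_lin_functional_def by blast+
    then obtain C where C: "\<forall>u\<in>Lp_fun ?I p. \<bar>l u\<bar> \<le> C * Lp_norm ?I p u" by blast
    have "bdd_lin_functional_on UNIV norm f"
      unfolding bdd_lin_functional_on_def
    proof (intro conjI ballI allI exI)
      fix x y :: 'x
      show "f (x + y) = f x + f y" unfolding f_def using add Lpc[of x] Lpc[of y] by auto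
    next
      fix c and x :: 'x
      show "f (c *\<^sub>R x) = c * f x" unfolding f_def using sc Lpc[of x] by auto
    next
      fix x :: 'x
      have "\<bar>l (\<lambda>t. x)\<bar> \<le> C * Lp_norm ?I p (\<lambda>t. x)" using C Lpc[of x] by blast
      then show "\<bar>f x\<bar> \<le> (C * K) * norm x" unfolding f_def nc[of x] by (simp add: algebra_simps)
    qed
    then have "(\<lambda>n. f (vs n)) \<longlonglongrightarrow> f v" using wc unfolding weak_conv_on_def by blast
    then show "(\<lambda>n. l (\<lambda>t. vs n)) \<longlonglongrightarrow> l (\<lambda>t. v)" unfolding f_def .
  qed
  moreover have "\<forall>n. (\<lambda>t. vs n) \<in> Lp_fun ?I p \<and> (AE t in lebesgue_on ?I. vs n \<in> Vs (m n))"
    using Lpc vs by auto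
  ultimately have ae: "AE t in lebesgue_on ?I. v \<in> V"
    using qnc[unfolded quasi_nonconforming_def, THEN conjunct2, THEN conjunct2, rule_format,
        of m "\<lambda>n t. vs n" "\<lambda>t. v"] m Lpc[of v] by blast
  show "v \<in> V"
  proof (rule ccontr)
    assume "v \<notin> V"
    then have "AE t in lebesgue_on ?I. False" using ae by simp
    then obtain N where N: "{x \<in> space (lebesgue_on ?I). \<not> False} \<subseteq> N"
        "emeasure (lebesgue_on ?I) N = 0" "N \<in> sets (lebesgue_on ?I)"
      by (rule AE_E)
    have "emeasure (lebesgue_on ?I) ?I \<le> emeasure (lebesgue_on ?I) N"
      using N(1,3) by (intro emeasure_mono) auto
    moreover have "emeasure (lebesgue_on ?I) ?I = ennreal T"
      using T by (simp add: emeasure_restrict_space)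
    ultimately show False using N(2) T by simp
  qed
qed




lemma ev_facts:
  fixes V :: "'x::real_normed_vector set" and H :: "'y::real_inner set"
  assumes "evolution_triple V H j"
  shows "subspace H" "complete H" "j ` V \<subseteq> H" "H \<subseteq> closure (j ` V)" "reflexive_on V" "inj_on j V"
    "linear j" "\<exists>C. \<forall>v\<in>V. norm (j v) \<le> C * norm v"
  using assms unfolding evolution_triple_def by blast+

lemma bl_of:
  fixes j :: "'x::real_normed_vector \<Rightarrow> 'y::real_normed_vector"
  assumes "linear j" "\<exists>C. \<forall>v\<in>UNIV. norm (j v) \<le> C * norm v"
  shows "bounded_linear j"
proof -
  obtain C where C: "\<And>v. norm (j v) \<le> C * norm v" using assms(2) by blast
  show ?thesis
  proof (rule bounded_linear_intro)
    show "j (x + y) = j x + j y" for x y by (rule linear_add[OF assms(1)])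
    show "j (r *\<^sub>R x) = r *\<^sub>R j x" for r x by (rule linear_scale[OF assms(1)])
    show "norm (j x) \<le> norm x * C" for x using C[of x] by (simp add: mult.commute)
  qed
qed

lemma part3:
  fixes V :: "'x::real_normed_vector set" and H :: "'y::real_inner set"
  assumes bj: "bounded_linear j" and HV: "H \<subseteq> closure (j ` V)"
    and qnc: "quasi_nonconforming T p V Vs" and h: "h \<in> H"
  shows "\<exists>(m :: nat \<Rightarrow> nat) vs. filterlim m at_top sequentially \<and> (\<forall>n. vs n \<in> Vs (m n)) \<and>
        (\<lambda>n. j (vs n)) \<longlonglongrightarrow> h"
proof -
  obtain D where D: "D \<subseteq> V" "V \<subseteq> closure D" and app: "\<And>d. d \<in> D \<Longrightarrow> \<exists>vs. (\<forall>n. vs n \<in> Vs n) \<and> vs \<longlonglongrightarrow> d"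
    using qnc unfolding quasi_nonconforming_def by blast
  have cj: "continuous_on (closure D) j" by (rule linear_continuous_on[OF bj])
  have "j ` closure D \<subseteq> closure (j ` D)"
    by (rule image_closure_subset[OF cj]) (auto intro: closure_subset[THEN subsetD])
  then have "j ` V \<subseteq> closure (j ` D)" using image_mono[OF D(2), of j] by (rule order_trans[rotated])
  then have "closure (j ` V) \<subseteq> closure (j ` D)" using closure_mono[of "j ` V" "closure (j ` D)"] by simp
  then have hD: "h \<in> closure (j ` D)" using HV h by (meson subsetD)
  have step: "\<exists>n y. k \<le> n \<and> y \<in> Vs n \<and> norm (j y - h) < 1 / real (Suc k)" for k
  proof -
    define e where "e = 1 / (2 * real (Suc k))"
    have e0: "0 < e" by (simp add: e_def)
    obtain d where d: "d \<in> D" "dist (j d) h < e" using hD e0 unfolding closure_approachable by blast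
    obtain vs where vs: "\<And>n. vs n \<in> Vs n" "vs \<longlonglongrightarrow> d" using app[OF d(1)] by blast
    have "(\<lambda>n. j (vs n)) \<longlonglongrightarrow> j d" using bounded_linear.tendsto[OF bj vs(2)] .
    then have "eventually (\<lambda>n. dist (j (vs n)) (j d) < e) sequentially" using e0 by (rule tendstoD)
    then obtain N where N: "\<And>n. N \<le> n \<Longrightarrow> dist (j (vs n)) (j d) < e" unfolding eventually_sequentially by blast
    define n where "n = max N k"
    have "dist (j (vs n)) h \<le> dist (j (vs n)) (j d) + dist (j d) h" by (rule dist_triangle)
    also have "\<dots> < e + e" using N[of n] d(2) by (simp add: n_def)
    also have "e + e = 1 / real (Suc k)" by (simp add: e_def field_simps)
    finally have "norm (j (vs n) - h) < 1 / real (Suc k)" by (simp add: dist_norm)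
    then show ?thesis using vs(1)[of n] by (intro exI[of _ n] exI[of _ "vs n"]) (simp add: n_def)
  qed
  then have "\<forall>k. \<exists>n. \<exists>y. k \<le> n \<and> y \<in> Vs n \<and> norm (j y - h) < 1 / real (Suc k)" by blast
  from choice[OF this] obtain m where "\<forall>k. \<exists>y. k \<le> m k \<and> y \<in> Vs (m k) \<and> norm (j y - h) < 1 / real (Suc k)"
    by blast
  from choice[OF this] obtain y where "\<forall>k. k \<le> m k \<and> y k \<in> Vs (m k) \<and> norm (j (y k) - h) < 1 / real (Suc k)"
    by blast
  then have my: "\<And>k. k \<le> m k" "\<And>k. y k \<in> Vs (m k)" "\<And>k. norm (j (y k) - h) < 1 / real (Suc k)"
    by auto
  have "filterlim m at_top sequentially"
    by (rule filterlim_at_top_mono[OF filterlim_ident]) (simp add: my(1) always_eventually)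
  moreover have "(\<lambda>k. j (y k) - h) \<longlonglongrightarrow> 0" by (rule LIMSEQ_norm_0) (rule my(3))
  then have "(\<lambda>k. j (y k)) \<longlonglongrightarrow> h" by (rule LIM_zero_cancel)
  ultimately show ?thesis using my(2) by blast
qed




lemma part2_fwd:
  fixes j :: "'x::real_normed_vector \<Rightarrow> 'y::real_inner"
  assumes bj: "bounded_linear j" and sH: "subspace H" and cH: "complete H"
    and jv: "j v \<in> H" and wc: "weak_conv_on UNIV norm vs v"
  shows "weak_conv_on H norm (\<lambda>n. orth_proj H (j (vs n))) (j v)"
  unfolding weak_conv_on_def
proof (intro allI impI)
  fix g :: "'y \<Rightarrow> real" assume bg: "bdd_lin_functional_on H norm g"
  let ?P = "orth_proj H"
  have gadd: "\<forall>u\<in>H. \<forall>w\<in>H. g (u + w) = g u + g w" and gsc: "\<forall>c. \<forall>u\<in>H. g (c *\<^sub>R u) = c * g u"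
    and "\<exists>C. \<forall>u\<in>H. \<bar>g u\<bar> \<le> C * norm u"
    using bg unfolding bdd_lin_functional_on_def by blast+
  then obtain C where C: "\<And>u. u \<in> H \<Longrightarrow> \<bar>g u\<bar> \<le> C * norm u" by blast
  obtain K where K0: "K > 0" and K: "\<And>x. norm (j x) \<le> norm x * K"
    using bounded_linear.pos_bounded[OF bj] by blast
  have PH: "?P y \<in> H" for y using proj_char[OF sH cH] by blast
  define f where "f x = g (?P (j x))" for x
  have "bdd_lin_functional_on UNIV norm f"
    unfolding bdd_lin_functional_on_def
  proof (intro conjI ballI allI exI)
    fix x y :: 'x
    show "f (x + y) = f x + f y"
      unfolding f_def linear_add[OF bounded_linear.linear[OF bj]] proj_add[OF sH cH]
      using gadd PH by blast
  next
    fix c and x :: 'x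
    show "f (c *\<^sub>R x) = c * f x"
      unfolding f_def linear_scale[OF bounded_linear.linear[OF bj]] proj_scale[OF sH cH]
      using gsc PH by blast
  next
    fix x :: 'x
    have "\<bar>f x\<bar> \<le> C * norm (?P (j x))" unfolding f_def by (rule C[OF PH])
    also have "\<dots> \<le> \<bar>C\<bar> * norm (?P (j x))" by (simp add: mult_right_mono)
    also have "\<dots> \<le> \<bar>C\<bar> * (norm x * K)"
      using proj_norm[OF sH cH, of "j x"] K[of x] by (intro mult_left_mono) auto
    finally show "\<bar>f x\<bar> \<le> (\<bar>C\<bar> * K) * norm x" by (simp add: algebra_simps)
  qed
  then have "(\<lambda>n. f (vs n)) \<longlonglongrightarrow> f v" using wc unfolding weak_conv_on_def by blast
  then show "(\<lambda>n. g (?P (j (vs n)))) \<longlonglongrightarrow> g (j v)"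
    unfolding f_def proj_id[OF sH cH jv] .
qed

lemma not_tendsto_subseq:
  fixes X :: "nat \<Rightarrow> real"
  assumes "\<not> X \<longlonglongrightarrow> L"
  shows "\<exists>e>0. \<exists>r::nat\<Rightarrow>nat. strict_mono r \<and> (\<forall>k::nat. e \<le> dist (X (r k)) L)"
proof -
  have "\<exists>e>0. \<not> eventually (\<lambda>n. dist (X n) L < e) sequentially"
    using assms by (simp add: tendsto_iff)
  then obtain e where e: "e > 0" and ne: "\<not> eventually (\<lambda>n. dist (X n) L < e) sequentially"
    by blast
  have "\<not> finite {n. \<not> dist (X n) L < e}"
  proof
    assume fin: "finite {n. \<not> dist (X n) L < e}"
    have "eventually (\<lambda>n. \<not> \<not> dist (X n) L < e) cofinite"
      using fin by (simp only: eventually_cofinite not_not)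
    then have "eventually (\<lambda>n. dist (X n) L < e) sequentially"
      by (simp only: cofinite_eq_sequentially not_not)
    then show False using ne by contradiction
  qed
  from infinite_enumerate[OF this] obtain r :: "nat \<Rightarrow> nat"
    where r: "strict_mono r" "\<forall>k. r k \<in> {n. \<not> dist (X n) L < e}" by blast
  have "\<forall>k. e \<le> dist (X (r k)) L" using r(2) by (simp add: not_less)
  with r(1) have "strict_mono r \<and> (\<forall>k::nat. e \<le> dist (X (r k)) L)" by (rule conjI)
  then have "\<exists>r::nat\<Rightarrow>nat. strict_mono r \<and> (\<forall>k::nat. e \<le> dist (X (r k)) L)" by (rule exI[where x=r])
  with e have "e > 0 \<and> (\<exists>r::nat\<Rightarrow>nat. strict_mono r \<and> (\<forall>k. e \<le> dist (X (r k)) L))" by (rule conjI)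
  then show ?thesis by (rule exI[where x=e])
qed

lemma inner_functional_H:
  fixes H :: "'y::real_inner set"
  shows "bdd_lin_functional_on H norm (\<lambda>y. inner y d)"
  unfolding bdd_lin_functional_on_def
proof (intro conjI ballI allI exI)
  fix u w :: 'y show "inner (u + w) d = inner u d + inner w d" by (simp add: inner_add_left)
next
  fix c and u :: 'y show "inner (c *\<^sub>R u) d = c * inner u d" by simp
next
  fix u :: 'y show "\<bar>inner u d\<bar> \<le> norm d * norm u"
    using Cauchy_Schwarz_ineq2[of u d] by (simp add: mult.commute)
qed

lemma part2_bwd:
  fixes V :: "'x::real_normed_vector set" and H :: "'y::real_inner set"
  assumes T: "0 < T" and p: "1 < p" and qnc: "quasi_nonconforming T p V Vs"
    and R: "reflexive_on (UNIV :: 'x set)" and bj: "bounded_linear j" and ij: "inj j"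
    and sH: "subspace H" and cH: "complete H" and jVH: "j ` V \<subseteq> H"
    and m: "filterlim m at_top sequentially" and vs: "\<And>n. vs n \<in> Vs (m n)"
    and bd: "bdd_above (range (\<lambda>n. norm (vs n)))" and vV: "v \<in> V"
    and wH: "weak_conv_on H norm (\<lambda>n. orth_proj H (j (vs n))) (j v)"
  shows "weak_conv_on UNIV norm vs v"
  unfolding weak_conv_on_def
proof (intro allI impI, rule ccontr)
  fix f :: "'x \<Rightarrow> real" assume bf: "bdd_lin_functional_on UNIV norm f"
    and nc: "\<not> (\<lambda>n. f (vs n)) \<longlonglongrightarrow> f v"
  obtain e and r :: "nat \<Rightarrow> nat" where e: "e > 0" and r: "strict_mono r" and far: "\<And>k. e \<le> dist (f (vs (r k))) (f v)"
    using not_tendsto_subseq[OF nc] by blast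
  obtain B where B: "\<And>n. norm (vs n) \<le> B" using bd unfolding bdd_above_def by auto
  obtain s w where s: "strict_mono s" and ws: "weak_conv_on UNIV norm (\<lambda>k. vs (r (s k))) w"
    using weak_subseq[OF R bj ij, of "\<lambda>k. vs (r k)" B] B by blast
  define q where "q = r \<circ> s"
  have q: "strict_mono q" unfolding q_def using r s by (rule strict_mono_o)
  have wq: "weak_conv_on UNIV norm (\<lambda>k. vs (q k)) w" using ws by (simp add: q_def)
  have mq: "filterlim (\<lambda>k. m (q k)) at_top sequentially"
    using filterlim_compose[OF m filterlim_subseq[OF q]] by (simp add: o_def)
  have wV: "w \<in> V" by (rule part1[OF T p qnc mq _ wq]) (rule vs)
  define d where "d = j w - j v"
  have dH: "d \<in> H" using jVH wV vV sH by (auto simp: d_def intro: subspace_diff)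
  have l1: "(\<lambda>k. inner (j (vs (q k))) d) \<longlonglongrightarrow> inner (j w) d"
    using wq inner_functional[OF bj, of d] unfolding weak_conv_on_def by blast
  have "(\<lambda>n. inner (orth_proj H (j (vs n))) d) \<longlonglongrightarrow> inner (j v) d"
    using wH inner_functional_H[of H d] unfolding weak_conv_on_def by blast
  then have "(\<lambda>n. inner (j (vs n)) d) \<longlonglongrightarrow> inner (j v) d"
    by (simp add: proj_inner[OF sH cH dH])
  from LIMSEQ_subseq_LIMSEQ[OF this q]
  have l2: "(\<lambda>k. inner (j (vs (q k))) d) \<longlonglongrightarrow> inner (j v) d" by (simp add: o_def)
  have "inner (j w) d = inner (j v) d" using LIMSEQ_unique[OF l1 l2] .
  then have "inner d d = 0" by (simp add: d_def inner_diff_left)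
  then have "j w = j v" by (simp add: d_def)
  then have "w = v" using ij by (simp add: inj_eq)
  have "(\<lambda>k. f (vs (q k))) \<longlonglongrightarrow> f v" using wq bf \<open>w = v\<close> unfolding weak_conv_on_def by blast
  then have "eventually (\<lambda>k. dist (f (vs (q k))) (f v) < e) sequentially" using e by (rule tendstoD)
  then obtain k where "dist (f (vs (q k))) (f v) < e" using eventually_sequentially by auto
  then show False using far[of "s k"] by (simp add: q_def)
qed




theorem mainTheorem4:
  fixes V :: "'x::banach set" and H :: "'y::{real_inner, complete_space} set"
    and j :: "'x \<Rightarrow> 'y" and Vs :: "nat \<Rightarrow> 'x set" and T p :: real
  assumes evVH: "evolution_triple V H j"
    and evXY: "evolution_triple (UNIV :: 'x set) (UNIV :: 'y set) j"
    and T: "0 < T" and p: "1 < p"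
    and qnc: "quasi_nonconforming T p V Vs"
  shows
   "(\<forall>(m :: nat \<Rightarrow> nat) vs v. filterlim m at_top sequentially \<longrightarrow> (\<forall>n. vs n \<in> Vs (m n)) \<longrightarrow>
        weak_conv_on UNIV norm vs v \<longrightarrow> v \<in> V)
  \<and> (\<forall>(m :: nat \<Rightarrow> nat) vs v. filterlim m at_top sequentially \<longrightarrow> (\<forall>n. vs n \<in> Vs (m n)) \<longrightarrow>
        bdd_above (range (\<lambda>n. norm (vs n))) \<longrightarrow> v \<in> V \<longrightarrow>
        (weak_conv_on UNIV norm vs v \<longleftrightarrow>
         weak_conv_on H norm (\<lambda>n. orth_proj H (j (vs n))) (j v)))
  \<and> (\<forall>h\<in>H. \<exists>(m :: nat \<Rightarrow> nat) vs. filterlim m at_top sequentially \<and> (\<forall>n. vs n \<in> Vs (m n)) \<and>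
        (\<lambda>n. j (vs n)) \<longlonglongrightarrow> h)"
proof -
  have R: "reflexive_on (UNIV :: 'x set)" and lj: "linear j"
    and jb: "\<exists>C. \<forall>v\<in>UNIV. norm (j v) \<le> C * norm v" and ij: "inj_on j UNIV"
    using ev_facts[OF evXY] by blast+
  have bj: "bounded_linear j" by (rule bl_of[OF lj jb])
  have sH: "subspace H" and cH: "complete H" and jVH: "j ` V \<subseteq> H" and HV: "H \<subseteq> closure (j ` V)"
    using ev_facts[OF evVH] by blast+
  show ?thesis
  proof (intro conjI allI impI ballI)
    fix m :: "nat \<Rightarrow> nat" and vs v
    assume "filterlim m at_top sequentially" "\<forall>n. vs n \<in> Vs (m n)" "weak_conv_on UNIV norm vs v"
    then show "v \<in> V" using part1[OF T p qnc] by blast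
  next
    fix m :: "nat \<Rightarrow> nat" and vs v
    assume m: "filterlim m at_top sequentially" and vs: "\<forall>n. vs n \<in> Vs (m n)"
      and bd: "bdd_above (range (\<lambda>n. norm (vs n)))" and vV: "v \<in> V"
    have jv: "j v \<in> H" using jVH vV by blast
    show "weak_conv_on UNIV norm vs v \<longleftrightarrow> weak_conv_on H norm (\<lambda>n. orth_proj H (j (vs n))) (j v)"
    proof
      assume "weak_conv_on UNIV norm vs v"
      then show "weak_conv_on H norm (\<lambda>n. orth_proj H (j (vs n))) (j v)"
        by (rule part2_fwd[OF bj sH cH jv])
    next
      assume wH: "weak_conv_on H norm (\<lambda>n. orth_proj H (j (vs n))) (j v)"
      show "weak_conv_on UNIV norm vs v"
        by (rule part2_bwd[OF T p qnc R bj ij sH cH jVH m _ bd vV wH]) (use vs in blast)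
    qed
  next
    fix h assume "h \<in> H"
    then show "\<exists>(m :: nat \<Rightarrow> nat) vs. filterlim m at_top sequentially \<and> (\<forall>n. vs n \<in> Vs (m n)) \<and>
        (\<lambda>n. j (vs n)) \<longlonglongrightarrow> h"
      by (rule part3[OF bj HV qnc])
  qed
qed


end
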